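(* Let $P$ be a joint distribution arising from the GTR+$\mu$ model on the 3-taxon tree with leaves $a,b,c$ attached by pendant edges of lengths $t_a,t_b,t_c$ to a single internal vertex. Let $L(u)=\mathbb E_\mu[e^{ru}]$ for $u\le 0$. Then the following are uniquely determined by $P$: (1) $\boldsymbol\pi$ (from the 1-taxon marginals); (2) the set of all matrices $U$ diagonalizing $Q$ as in the context, and, for every $i\in[\kappa]$, the values $L(\lambda_i(t_a+t_b))$, $L(\lambda_i(t_a+t_c))$, $L(\lambda_i(t_b+t_c))$ (from the 2-taxon marginals); (3) for some such choice of $U$, the values $L(\lambda_i t_a+\lambda_j t_b+\lambda_k t_c)$ for all $i,j,k\in[\kappa]$ with $\nu_{ijk}\neq0$.
   Context: GTR+$\mu$ model with $\kappa$ states: $\boldsymbol\pi$ with positive entries summing to $1$; $Q$ with positive off-diagonal entries, zero row sums, $\operatorname{diag}(\boldsymbol\pi)Q$ symmetric and of trace $-1$; $\mu$ a distribution of rates on $[0,\infty)$ with mean $1$; edge lengths $t_a,t_b,t_c\ge0$ with no two taxa at total distance $0$. The joint distribution is $P(i,j,k)=\int\sum_{h}\pi_h\exp(t_arQ)_{hi}\exp(t_brQ)_{hj}\exp(t_crQ)_{hk}\,d\mu(r)$. Diagonalization: $Q=U\operatorname{diag}(0,\lambda_2,\dots,\lambda_\kappa)U^{-1}$ with $0=\lambda_1>\lambda_2\ge\dots\ge\lambda_\kappa$, $U$ real with $UU^T=\operatorname{diag}(\boldsymbol\pi)^{-1}$ (equivalently $U^T\operatorname{diag}(\boldsymbol\pi)U=I$)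 and first column $\mathbf 1$. Define $\nu_{ijk}=\sum_{l}\pi_lU_{li}U_{lj}U_{lk}$. *)

theory Defs
  imports "HOL-Probability.Probability"
begin

text \<open>States are indexed by a finite linearly ordered type 'n (kappa = CARD('n));
  the ordering of 'n gives the indices 1,...,kappa; the first index is the least element.\<close>

definition first_idx :: "'n::{finite,linorder}" where
  "first_idx = (LEAST i. True)"

fun mpow :: "real^'n^'n \<Rightarrow> nat \<Rightarrow> real^'n^'n" where
  "mpow A 0 = mat 1"
| "mpow A (Suc n) = A ** mpow A n"

definition mexp :: "real^'n^'n \<Rightarrow> real^'n^'n" where
  "mexp A = (\<Sum>n. (1 / fact n) *\<^sub>R mpow A n)"

definition diagm :: "('n \<Rightarrow> real) \<Rightarrow> real^'n^'n" where
  "diagm d = (\<chi> i j. if i = j then d i else 0)"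

definition GTR :: "real^'n \<Rightarrow> real^'n^'n \<Rightarrow> bool" where
  "GTR \<pi> Q \<longleftrightarrow>
     (\<forall>i. \<pi> $ i > 0) \<and> (\<Sum>i\<in>UNIV. \<pi> $ i) = 1 \<and>
     (\<forall>i j. i \<noteq> j \<longrightarrow> Q $ i $ j > 0) \<and>
     (\<forall>i. (\<Sum>j\<in>UNIV. Q $ i $ j) = 0) \<and>
     (\<forall>i j. \<pi> $ i * Q $ i $ j = \<pi> $ j * Q $ j $ i) \<and>
     (\<Sum>i\<in>UNIV. \<pi> $ i * Q $ i $ i) = -1"

definition rate_dist :: "real measure \<Rightarrow> bool" where
  "rate_dist \<mu> \<longleftrightarrow> prob_space \<mu> \<and> sets \<mu> = sets borel \<and>
     (AE r in \<mu>. r \<ge> 0) \<and> integrable \<mu> (\<lambda>r. r) \<and> (\<integral>r. r \<partial>\<mu>) = 1"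

definition edges_ok :: "real \<Rightarrow> real \<Rightarrow> real \<Rightarrow> bool" where
  "edges_ok ta tb tc \<longleftrightarrow> ta \<ge> 0 \<and> tb \<ge> 0 \<and> tc \<ge> 0 \<and>
     ta + tb > 0 \<and> ta + tc > 0 \<and> tb + tc > 0"

definition jointP :: "real^'n \<Rightarrow> real^'n^'n \<Rightarrow> real measure \<Rightarrow> real \<Rightarrow> real \<Rightarrow> real
    \<Rightarrow> 'n \<Rightarrow> 'n \<Rightarrow> 'n \<Rightarrow> real" where
  "jointP \<pi> Q \<mu> ta tb tc i j k =
     (\<integral>r. (\<Sum>h\<in>UNIV. \<pi> $ h * mexp ((ta * r) *\<^sub>R Q) $ h $ i
               * mexp ((tb * r) *\<^sub>R Q) $ h $ j * mexp ((tc * r) *\<^sub>R Q) $ h $ k) \<partial>\<mu>)"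

definition diagonalizes :: "(real, 'n::{finite,linorder}) vec \<Rightarrow> ((real, 'n) vec, 'n) vec \<Rightarrow> ((real, 'n) vec, 'n) vec
    \<Rightarrow> ('n \<Rightarrow> real) \<Rightarrow> bool" where
  "diagonalizes \<pi> Q U lam \<longleftrightarrow>
     Q = U ** diagm lam ** matrix_inv U \<and>
     lam first_idx = 0 \<and> (\<forall>i. i \<noteq> first_idx \<longrightarrow> lam i < 0) \<and>
     (\<forall>i j. i \<le> j \<longrightarrow> lam j \<le> lam i) \<and>
     U ** transpose U = diagm (\<lambda>i. inverse (\<pi> $ i)) \<and>
     (\<forall>l. U $ l $ first_idx = 1)"

definition nu :: "real^'n \<Rightarrow> real^'n^'n \<Rightarrow> 'n \<Rightarrow> 'n \<Rightarrow> 'n \<Rightarrow> real" where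
  "nu \<pi> U i j k = (\<Sum>l\<in>UNIV. \<pi> $ l * U $ l $ i * U $ l $ j * U $ l $ k)"

definition Lap :: "real measure \<Rightarrow> real \<Rightarrow> real" where
  "Lap \<mu> u = (\<integral>r. exp (r * u) \<partial>\<mu>)"

end

theory Submission
  imports Defs
begin

lemma mmult_nth: "(A ** B) $ i $ j = (\<Sum>k\<in>UNIV. A $ i $ k * B $ k $ j)"
  for A B :: "real^'n^'n"
  by (simp add: matrix_matrix_mult_def)

lemma diagm_nth: "diagm d $ i $ j = (if i = j then d i else 0)"
  by (simp add: diagm_def)

lemma mult_diagm_nth: "(A ** diagm d) $ i $ j = A $ i $ j * d j" for A :: "real^'n^'n"
  by (simp add: mmult_nth diagm_nth if_distrib cong: if_cong)

lemma diagm_mult_nth: "(diagm d ** A) $ i $ j = d i * A $ i $ j" for A :: "real^'n^'n"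
  by (simp add: mmult_nth diagm_nth if_distrib[of "\<lambda>x. x * _"] cong: if_cong)

lemma diagm_mult_diagm: "diagm d ** diagm e = diagm (\<lambda>i. d i * e i)"
  by (simp add: vec_eq_iff diagm_mult_nth diagm_nth)

lemma diagm_one: "diagm (\<lambda>i. 1) = mat 1"
  by (simp add: vec_eq_iff diagm_nth mat_def)

lemma mpow_conj:
  fixes U V :: "real^'n^'n"
  assumes "V ** U = mat 1" "U ** V = mat 1"
  shows "mpow (U ** diagm d ** V) n = U ** diagm (\<lambda>i. d i ^ n) ** V"
proof (induction n)
  case 0
  show ?case by (simp add: diagm_one assms)
next
  case (Suc n)
  have "mpow (U ** diagm d ** V) (Suc n) = (U ** diagm d ** V) ** (U ** diagm (\<lambda>i. d i ^ n) ** V)"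
    using Suc by simp
  also have "\<dots> = U ** diagm d ** (V ** U) ** diagm (\<lambda>i. d i ^ n) ** V"
    by (simp add: matrix_mul_assoc)
  also have "\<dots> = U ** diagm (\<lambda>i. d i ^ Suc n) ** V"
    by (simp add: assms matrix_mul_assoc) (metis diagm_mult_diagm matrix_mul_assoc)
  finally show ?case .
qed

lemma conj_nth: "(U ** diagm d ** V) $ h $ i = (\<Sum>a\<in>UNIV. U $ h $ a * d a * V $ a $ i)"
  for U V :: "real^'n^'n"
  by (simp add: mmult_nth[of "U ** diagm d" V] mult_diagm_nth)

lemma mexp_conj:
  fixes U V :: "real^'n^'n"
  assumes "V ** U = mat 1" "U ** V = mat 1"
  shows "mexp (U ** diagm d ** V) = U ** diagm (\<lambda>i. exp (d i)) ** V"
proof -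
  define F where "F n = (1 / fact n) *\<^sub>R (U ** diagm (\<lambda>i. d i ^ n) ** V)" for n
  have Fe: "F n $ h $ i = (\<Sum>a\<in>UNIV. U $ h $ a * (d a ^ n /\<^sub>R fact n) * V $ a $ i)" for n h i
    unfolding F_def by (simp add: conj_nth sum_distrib_left field_simps)
  have "F sums (U ** diagm (\<lambda>i. exp (d i)) ** V)"
    unfolding sums_def
  proof (rule vec_tendstoI, rule vec_tendstoI)
    fix h i
    have "(\<lambda>n. \<Sum>a\<in>UNIV. U $ h $ a * (d a ^ n /\<^sub>R fact n) * V $ a $ i) sums
          (\<Sum>a\<in>UNIV. U $ h $ a * exp (d a) * V $ a $ i)"
      by (intro sums_sum sums_mult sums_mult2 exp_converges)
    then show "(\<lambda>N. (\<Sum>n<N. F n) $ h $ i) \<longlonglongrightarrow> (U ** diagm (\<lambda>i. exp (d i)) ** V) $ h $ i"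
      unfolding sums_def conj_nth by (simp add: Fe)
  qed
  moreover have "mexp (U ** diagm d ** V) = suminf F"
    unfolding mexp_def F_def using mpow_conj[OF assms] by simp
  ultimately show ?thesis using sums_unique by metis
qed

lemma diag_basic:
  fixes \<pi> :: "(real, 'n::{finite,linorder}) vec" and Q U :: "((real, 'n) vec, 'n) vec"
  assumes D: "diagonalizes \<pi> Q U lam" and pos: "\<And>i. \<pi> $ i > 0"
  defines "V \<equiv> (\<chi> a i. U $ i $ a * \<pi> $ i)"
  shows "U ** V = mat 1" "V ** U = mat 1" "matrix_inv U = V" "Q = U ** diagm lam ** V"
    "(\<Sum>i\<in>UNIV. \<pi> $ i * U $ i $ a * U $ i $ b) = (if a = b then 1 else 0)"
    "lam a \<le> 0"
proof -
  have UUt: "U ** transpose U = diagm (\<lambda>i. inverse (\<pi> $ i))"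
    using D unfolding diagonalizes_def by blast
  show UV: "U ** V = mat 1"
  proof -
    have "(U ** V) $ l $ m = (if l = m then 1 else 0)" for l m
    proof -
      have "(U ** V) $ l $ m = (U ** transpose U) $ l $ m * \<pi> $ m"
        by (simp add: mmult_nth V_def transpose_def sum_distrib_right mult.assoc)
      also have "\<dots> = (if l = m then 1 else 0)"
        using pos[of m] by (simp add: UUt diagm_nth)
      finally show ?thesis .
    qed
    then show ?thesis by (simp add: vec_eq_iff mat_def)
  qed
  show VU: "V ** U = mat 1" using UV matrix_left_right_inverse by blast
  show "matrix_inv U = V"
  proof -
    have "U ** matrix_inv U = mat 1 \<and> matrix_inv U ** U = mat 1"
      unfolding matrix_inv_def by (rule someI[of _ V]) (use UV VU in blast)
    then have "matrix_inv U = V ** (U ** matrix_inv U)" by (metis VU matrix_mul_assoc matrix_mul_lid)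
    also have "\<dots> = V" using \<open>U ** matrix_inv U = mat 1 \<and> _\<close>  by simp
    finally show ?thesis .
  qed
  then show "Q = U ** diagm lam ** V" using D unfolding diagonalizes_def by simp
  show "(\<Sum>i\<in>UNIV. \<pi> $ i * U $ i $ a * U $ i $ b) = (if a = b then 1 else 0)"
    using arg_cong[OF VU, of "\<lambda>M. M $ a $ b"]
    by (simp add: mmult_nth V_def mat_def mult.commute mult.left_commute)
  show "lam a \<le> 0" using D unfolding diagonalizes_def by (cases "a = first_idx") force+
qed


lemma rate_measurable: "rate_dist \<mu> \<Longrightarrow> measurable \<mu> borel = measurable borel borel"
  unfolding rate_dist_def by (intro measurable_cong_sets) auto

lemma integrable_exp:
  assumes R: "rate_dist \<mu>" and u: "u \<le> 0"
  shows "integrable \<mu> (\<lambda>r. exp (r * u))"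
proof -
  interpret prob_space \<mu> using R unfolding rate_dist_def by blast
  have m: "(\<lambda>r. exp (r * u)) \<in> borel_measurable \<mu>"
    unfolding rate_measurable[OF R] by measurable
  have "AE r in \<mu>. norm (exp (r * u)) \<le> 1"
    using R unfolding rate_dist_def
    by (auto elim!: eventually_mono simp: mult_nonneg_nonpos u)
  then show ?thesis using m by (rule integrable_const_bound)
qed

lemma Lap_0: "rate_dist \<mu> \<Longrightarrow> Lap \<mu> 0 = 1"
  unfolding Lap_def rate_dist_def by (simp add: prob_space.prob_space)

lemma prod3_sum:
  "(\<Sum>a\<in>A. f a) * (\<Sum>b\<in>B. g b) * (\<Sum>c\<in>C. h c) = (\<Sum>a\<in>A. \<Sum>b\<in>B. \<Sum>c\<in>C. f a * g b * h c)"
  for f g h :: "'a \<Rightarrow> real"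
proof -
  have "(\<Sum>b\<in>B. g b) * (\<Sum>c\<in>C. h c) = (\<Sum>b\<in>B. \<Sum>c\<in>C. g b * h c)" by (rule sum_product)
  then have "(\<Sum>a\<in>A. f a) * (\<Sum>b\<in>B. g b) * (\<Sum>c\<in>C. h c) = (\<Sum>a\<in>A. f a * (\<Sum>b\<in>B. \<Sum>c\<in>C. g b * h c))"
    by (simp add: mult.assoc sum_distrib_right)
  also have "\<dots> = (\<Sum>a\<in>A. \<Sum>b\<in>B. \<Sum>c\<in>C. f a * g b * h c)"
    by (simp add: sum_distrib_left mult.assoc)
  finally show ?thesis .
qed

lemma mexp_entry:
  fixes \<pi> :: "(real, 'n::{finite,linorder}) vec" and Q U :: "((real, 'n) vec, 'n) vec"
  assumes D: "diagonalizes \<pi> Q U lam" and pos: "\<And>i. \<pi> $ i > 0"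
  shows "mexp (s *\<^sub>R Q) $ h $ i = (\<Sum>a\<in>UNIV. U $ h $ a * exp (s * lam a) * (U $ i $ a * \<pi> $ i))"
proof -
  define V where "V = (\<chi> a i. U $ i $ a * \<pi> $ i)"
  note B = diag_basic[OF D pos, folded V_def]
  have "s *\<^sub>R Q = U ** diagm (\<lambda>a. s * lam a) ** V"
    by (subst B(4)) (simp add: vec_eq_iff conj_nth sum_distrib_left mult_ac)
  then have "mexp (s *\<^sub>R Q) = U ** diagm (\<lambda>a. exp (s * lam a)) ** V"
    using mexp_conj[OF B(2) B(1)] by simp
  then show ?thesis by (simp add: conj_nth V_def)
qed

lemma sum_swap4:
  "(\<Sum>h\<in>H. \<Sum>a\<in>A. \<Sum>b\<in>B. \<Sum>c\<in>C. f h a b c) = (\<Sum>a\<in>A. \<Sum>b\<in>B. \<Sum>c\<in>C. \<Sum>h\<in>H. f h a b c)"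
proof -
  have "(\<Sum>h\<in>H. \<Sum>a\<in>A. \<Sum>b\<in>B. \<Sum>c\<in>C. f h a b c) = (\<Sum>a\<in>A. \<Sum>h\<in>H. \<Sum>b\<in>B. \<Sum>c\<in>C. f h a b c)"
    by (rule sum.swap)
  also have "\<dots> = (\<Sum>a\<in>A. \<Sum>b\<in>B. \<Sum>h\<in>H. \<Sum>c\<in>C. f h a b c)"
    by (rule sum.cong[OF refl], rule sum.swap)
  also have "\<dots> = (\<Sum>a\<in>A. \<Sum>b\<in>B. \<Sum>c\<in>C. \<Sum>h\<in>H. f h a b c)"
    by (rule sum.cong[OF refl], rule sum.cong[OF refl], rule sum.swap)
  finally show ?thesis .
qed

lemma integrand_expand:
  fixes \<pi> :: "(real, 'n::{finite,linorder}) vec" and Q U :: "((real, 'n) vec, 'n) vec"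
  assumes D: "diagonalizes \<pi> Q U lam" and pos: "\<And>i. \<pi> $ i > 0"
  shows "(\<Sum>h\<in>UNIV. \<pi> $ h * mexp ((ta * r) *\<^sub>R Q) $ h $ i
               * mexp ((tb * r) *\<^sub>R Q) $ h $ j * mexp ((tc * r) *\<^sub>R Q) $ h $ k)
    = (\<Sum>a\<in>UNIV. \<Sum>b\<in>UNIV. \<Sum>c\<in>UNIV.
         (\<pi> $ i * \<pi> $ j * \<pi> $ k * (U $ i $ a * U $ j $ b * U $ k $ c * nu \<pi> U a b c))
         * exp (r * (lam a * ta + lam b * tb + lam c * tc)))"
proof -
  let ?X = "\<lambda>h a b c. (U $ h $ a * exp (ta * r * lam a) * (U $ i $ a * \<pi> $ i)) *
     (U $ h $ b * exp (tb * r * lam b) * (U $ j $ b * \<pi> $ j)) *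
     (U $ h $ c * exp (tc * r * lam c) * (U $ k $ c * \<pi> $ k))"
  have "(\<Sum>h\<in>UNIV. \<pi> $ h * mexp ((ta * r) *\<^sub>R Q) $ h $ i
               * mexp ((tb * r) *\<^sub>R Q) $ h $ j * mexp ((tc * r) *\<^sub>R Q) $ h $ k)
     = (\<Sum>h\<in>UNIV. \<pi> $ h * (\<Sum>a\<in>UNIV. \<Sum>b\<in>UNIV. \<Sum>c\<in>UNIV. ?X h a b c))"
    unfolding mexp_entry[OF D pos]
    apply (rule sum.cong[OF refl])
    apply (subst prod3_sum[symmetric])
    apply (simp only: mult.assoc)
    done
  also have "\<dots> = (\<Sum>h\<in>UNIV. \<Sum>a\<in>UNIV. \<Sum>b\<in>UNIV. \<Sum>c\<in>UNIV. \<pi> $ h * ?X h a b c)"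
    by (simp add: sum_distrib_left)
  also have "\<dots> = (\<Sum>a\<in>UNIV. \<Sum>b\<in>UNIV. \<Sum>c\<in>UNIV. \<Sum>h\<in>UNIV. \<pi> $ h * ?X h a b c)"
    by (rule sum_swap4)
  also have "\<dots> = (\<Sum>a\<in>UNIV. \<Sum>b\<in>UNIV. \<Sum>c\<in>UNIV.
         (\<pi> $ i * \<pi> $ j * \<pi> $ k * (U $ i $ a * U $ j $ b * U $ k $ c * nu \<pi> U a b c))
         * exp (r * (lam a * ta + lam b * tb + lam c * tc)))"
  proof (intro sum.cong refl)
    fix a b c
    have e: "exp (ta * r * lam a) * exp (tb * r * lam b) * exp (tc * r * lam c)
        = exp (r * (lam a * ta + lam b * tb + lam c * tc))"
      by (simp add: exp_add[symmetric] algebra_simps)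
    show "(\<Sum>h\<in>UNIV. \<pi> $ h * ?X h a b c) = 
         (\<pi> $ i * \<pi> $ j * \<pi> $ k * (U $ i $ a * U $ j $ b * U $ k $ c * nu \<pi> U a b c))
         * exp (r * (lam a * ta + lam b * tb + lam c * tc))"
      unfolding nu_def e[symmetric] sum_distrib_left sum_distrib_right
      by (rule sum.cong[OF refl]) (simp add: mult_ac)
  qed
  finally show ?thesis .
qed

lemma jointP_expand:
  fixes \<pi> :: "(real, 'n::{finite,linorder}) vec" and Q U :: "((real, 'n) vec, 'n) vec"
  assumes D: "diagonalizes \<pi> Q U lam" and pos: "\<And>i. \<pi> $ i > 0" and R: "rate_dist \<mu>"
    and t: "ta \<ge> 0" "tb \<ge> 0" "tc \<ge> 0"
  shows "jointP \<pi> Q \<mu> ta tb tc i j k = (\<Sum>a\<in>UNIV. \<Sum>b\<in>UNIV. \<Sum>c\<in>UNIV.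
         (\<pi> $ i * \<pi> $ j * \<pi> $ k * (U $ i $ a * U $ j $ b * U $ k $ c * nu \<pi> U a b c))
         * Lap \<mu> (lam a * ta + lam b * tb + lam c * tc))"
proof -
  have w: "lam a * ta + lam b * tb + lam c * tc \<le> 0" for a b c
    using diag_basic(6)[OF D pos] t by (simp add: add_nonpos_nonpos mult_nonpos_nonneg)
  have I: "integrable \<mu> (\<lambda>r. C * exp (r * (lam a * ta + lam b * tb + lam c * tc)))" for a b c C
    using integrable_exp[OF R w] by simp
  show ?thesis
    unfolding jointP_def integrand_expand[OF D pos] Lap_def
    apply (subst Bochner_Integration.integral_sum; (force intro!: integrable_sum integrable_mult_right integrable_exp[OF R] w)?)
    apply (rule sum.cong[OF refl])
    apply (subst Bochner_Integration.integral_sum; (force intro!: integrable_sum integrable_mult_right integrable_exp[OF R] w)?)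
    apply (rule sum.cong[OF refl])
    apply (subst Bochner_Integration.integral_sum; (force intro!: integrable_sum integrable_mult_right integrable_exp[OF R] w)?)
    done
qed


lemma diag_first:
  assumes "diagonalizes \<pi> Q U lam"
  shows "U $ l $ first_idx = 1" "lam first_idx = 0"
  using assms unfolding diagonalizes_def by auto

lemma diag_rows:
  assumes "diagonalizes \<pi> Q U lam"
  shows "(\<Sum>a\<in>UNIV. U $ i $ a * U $ j $ a) = (if i = j then inverse (\<pi> $ i) else 0)"
proof -
  have "U ** transpose U = diagm (\<lambda>i. inverse (\<pi> $ i))"
    using assms unfolding diagonalizes_def by blast
  from arg_cong[OF this, of "\<lambda>M. M $ i $ j"] show ?thesis
    by (simp add: mmult_nth transpose_def diagm_nth)
qed

lemma marg2:
  fixes \<pi> :: "(real, 'n::{finite,linorder}) vec" and Q U :: "((real, 'n) vec, 'n) vec"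
  assumes D: "diagonalizes \<pi> Q U lam" and pos: "\<And>i. \<pi> $ i > 0" and R: "rate_dist \<mu>"
    and t: "ta \<ge> 0" "tb \<ge> 0" "tc \<ge> 0"
  shows "(\<Sum>k\<in>UNIV. jointP \<pi> Q \<mu> ta tb tc i j k)
     = \<pi> $ i * \<pi> $ j * (\<Sum>a\<in>UNIV. U $ i $ a * U $ j $ a * Lap \<mu> (lam a * (ta + tb)))"
proof -
  note O = diag_basic(5)[OF D pos]
  have c1: "(\<Sum>k\<in>UNIV. \<pi> $ k * U $ k $ c) = (if c = first_idx then 1 else 0)" for c
    using O[of c first_idx] by (simp add: diag_first[OF D] eq_commute)
  have nf: "nu \<pi> U a b first_idx = (if a = b then 1 else 0)" for a b
    using O[of a b] by (simp add: nu_def diag_first[OF D])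
  let ?C = "\<lambda>a b c. \<pi> $ i * \<pi> $ j * (U $ i $ a * U $ j $ b * nu \<pi> U a b c)
         * Lap \<mu> (lam a * ta + lam b * tb + lam c * tc)"
  have "(\<Sum>k\<in>UNIV. jointP \<pi> Q \<mu> ta tb tc i j k)
     = (\<Sum>k\<in>UNIV. \<Sum>a\<in>UNIV. \<Sum>b\<in>UNIV. \<Sum>c\<in>UNIV. ?C a b c * (\<pi> $ k * U $ k $ c))"
    unfolding jointP_expand[OF D pos R t]
    by (intro sum.cong refl) (simp add: mult_ac)
  also have "\<dots> = (\<Sum>a\<in>UNIV. \<Sum>b\<in>UNIV. \<Sum>c\<in>UNIV. \<Sum>k\<in>UNIV. ?C a b c * (\<pi> $ k * U $ k $ c))"
    by (rule sum_swap4)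
  also have "\<dots> = (\<Sum>a\<in>UNIV. \<Sum>b\<in>UNIV. ?C a b first_idx)"
    by (simp add: sum_distrib_left[symmetric] c1 if_distrib[of "\<lambda>x. _ * x"] cong: if_cong)
  also have "\<dots> = (\<Sum>a\<in>UNIV. ?C a a first_idx)"
    by (simp add: nf if_distrib[of "\<lambda>x. _ * x"] if_distrib[of "\<lambda>x. x * _"] cong: if_cong)
  also have "\<dots> = \<pi> $ i * \<pi> $ j * (\<Sum>a\<in>UNIV. U $ i $ a * U $ j $ a * Lap \<mu> (lam a * (ta + tb)))"
    by (simp add: nf diag_first[OF D] sum_distrib_left distrib_left mult_ac)
  finally show ?thesis .
qed

lemma marg1:
  fixes \<pi> :: "(real, 'n::{finite,linorder}) vec" and Q U :: "((real, 'n) vec, 'n) vec"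
  assumes D: "diagonalizes \<pi> Q U lam" and pos: "\<And>i. \<pi> $ i > 0" and R: "rate_dist \<mu>"
    and t: "ta \<ge> 0" "tb \<ge> 0" "tc \<ge> 0"
  shows "(\<Sum>j\<in>UNIV. \<Sum>k\<in>UNIV. jointP \<pi> Q \<mu> ta tb tc i j k) = \<pi> $ i"
proof -
  note O = diag_basic(5)[OF D pos]
  have c1: "(\<Sum>k\<in>UNIV. \<pi> $ k * U $ k $ c) = (if c = first_idx then 1 else 0)" for c
    using O[of c first_idx] by (simp add: diag_first[OF D] eq_commute)
  have "(\<Sum>j\<in>UNIV. \<Sum>k\<in>UNIV. jointP \<pi> Q \<mu> ta tb tc i j k)
    = (\<Sum>j\<in>UNIV. \<Sum>a\<in>UNIV. \<pi> $ i * U $ i $ a * Lap \<mu> (lam a * (ta + tb)) * (\<pi> $ j * U $ j $ a))"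
    unfolding marg2[OF D pos R t] by (simp add: sum_distrib_left mult_ac)
  also have "\<dots> = (\<Sum>a\<in>UNIV. \<pi> $ i * U $ i $ a * Lap \<mu> (lam a * (ta + tb)) * (\<Sum>j\<in>UNIV. \<pi> $ j * U $ j $ a))"
    by (subst sum.swap) (simp add: sum_distrib_left)
  also have "\<dots> = \<pi> $ i"
    by (simp add: c1 if_distrib[of "\<lambda>x. _ * x"] diag_first[OF D] Lap_0[OF R] cong: if_cong)
  finally show ?thesis .
qed

lemma jointP_perm1: "jointP \<pi> Q \<mu> ta tb tc i j k = jointP \<pi> Q \<mu> ta tc tb i k j"
  unfolding jointP_def by (simp add: mult_ac)

lemma jointP_perm2: "jointP \<pi> Q \<mu> ta tb tc i j k = jointP \<pi> Q \<mu> tb tc ta j k i"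
  unfolding jointP_def by (simp add: mult_ac)


lemma Lap_mono:
  assumes R: "rate_dist \<mu>" and "u \<le> v" "v \<le> 0"
  shows "Lap \<mu> u \<le> Lap \<mu> v"
  unfolding Lap_def
proof (rule integral_mono_AE)
  show "integrable \<mu> (\<lambda>r. exp (r * u))" "integrable \<mu> (\<lambda>r. exp (r * v))"
    using integrable_exp[OF R] assms by auto
  show "AE r in \<mu>. exp (r * u) \<le> exp (r * v)"
  proof -
    have "AE r in \<mu>. r \<ge> 0" using R unfolding rate_dist_def by blast
    then show ?thesis
    proof (rule eventually_mono)
      fix r :: real assume "r \<ge> 0"
      then have "r * u \<le> r * v" using assms(2) by (rule mult_left_mono[rotated])
      then show "exp (r * u) \<le> exp (r * v)" by simp
    qed
  qed
qed

lemma Lap_strict: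
  assumes R: "rate_dist \<mu>" and uv: "u < v" and v: "v \<le> 0"
  shows "Lap \<mu> u < Lap \<mu> v"
proof (rule ccontr)
  assume "\<not> ?thesis"
  then have le: "Lap \<mu> v \<le> Lap \<mu> u" by simp
  define f where "f r = exp (r * v) - exp (r * u)" for r
  have Iu: "integrable \<mu> (\<lambda>r. exp (r * u))" "integrable \<mu> (\<lambda>r. exp (r * v))"
    using integrable_exp[OF R] uv v by auto
  then have If: "integrable \<mu> f" unfolding f_def by auto
  have AE0: "AE r in \<mu>. r \<ge> 0" using R unfolding rate_dist_def by blast
  have nn: "AE r in \<mu>. 0 \<le> f r"
    using AE0
  proof (rule eventually_mono)
    fix r :: real assume "r \<ge> 0"
    then have "r * u \<le> r * v" using uv by (intro mult_left_mono) auto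
    then show "0 \<le> f r" by (simp add: f_def)
  qed
  have "integral\<^sup>L \<mu> f = Lap \<mu> v - Lap \<mu> u"
    unfolding f_def Lap_def using Iu by simp
  moreover have "integral\<^sup>L \<mu> f \<ge> 0" using nn by (rule integral_nonneg_AE)
  ultimately have "integral\<^sup>L \<mu> f = 0" using le by simp
  then have "AE r in \<mu>. f r = 0" using integral_nonneg_eq_0_iff_AE[OF If nn] by simp
  then have AEr: "AE r in \<mu>. r = 0"
  proof (rule eventually_mono)
    fix r assume "f r = 0"
    then have "r * v = r * u" unfolding f_def by simp
    then show "r = 0" using uv by simp
  qed
  have "(\<integral>r. r \<partial>\<mu>) = (\<integral>r. 0 \<partial>\<mu>)"
  proof (rule integral_cong_AE)
    show "(\<lambda>r::real. r) \<in> borel_measurable \<mu>" unfolding rate_measurable[OF R] by simp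
    show "(\<lambda>r::real. 0::real) \<in> borel_measurable \<mu>" by simp
    show "AE r in \<mu>. r = 0" by (rule AEr)
  qed
  then show False using R unfolding rate_dist_def by simp
qed

lemma Lap_inj:
  assumes R: "rate_dist \<mu>" and "x \<le> 0" "y \<le> 0" "Lap \<mu> x = Lap \<mu> y"
  shows "x = y"
proof (rule ccontr)
  assume "x \<noteq> y"
  then have "x < y \<or> y < x" by auto
  then show False using Lap_strict[OF R, of x y] Lap_strict[OF R, of y x] assms by auto
qed

lemma sum3_fact:
  "(\<Sum>i\<in>I. \<Sum>j\<in>J. \<Sum>c\<in>C. f i c * h j c * k c) = (\<Sum>c\<in>C. k c * (\<Sum>i\<in>I. f i c) * (\<Sum>j\<in>J. h j c))"
  for f h :: "_ \<Rightarrow> _ \<Rightarrow> real"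
proof -
  have "(\<Sum>i\<in>I. \<Sum>j\<in>J. \<Sum>c\<in>C. f i c * h j c * k c) = (\<Sum>i\<in>I. \<Sum>c\<in>C. \<Sum>j\<in>J. f i c * h j c * k c)"
    by (rule sum.cong[OF refl], rule sum.swap)
  also have "\<dots> = (\<Sum>c\<in>C. \<Sum>i\<in>I. \<Sum>j\<in>J. f i c * h j c * k c)"
    by (rule sum.swap)
  also have "\<dots> = (\<Sum>c\<in>C. k c * (\<Sum>i\<in>I. f i c) * (\<Sum>j\<in>J. h j c))"
    by (simp add: sum_distrib_left sum_distrib_right mult_ac)
  finally show ?thesis .
qed

lemma sum_prod_swap:
  "(\<Sum>a\<in>A. (\<Sum>i\<in>I. F a i) * (\<Sum>j\<in>J. G a j)) = (\<Sum>i\<in>I. \<Sum>j\<in>J. \<Sum>a\<in>A. F a i * G a j)"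
  for F G :: "_ \<Rightarrow> _ \<Rightarrow> real"
proof -
  have "(\<Sum>a\<in>A. (\<Sum>i\<in>I. F a i) * (\<Sum>j\<in>J. G a j)) = (\<Sum>a\<in>A. \<Sum>i\<in>I. \<Sum>j\<in>J. F a i * G a j)"
    by (simp add: sum_product)
  also have "\<dots> = (\<Sum>i\<in>I. \<Sum>a\<in>A. \<Sum>j\<in>J. F a i * G a j)" by (rule sum.swap)
  also have "\<dots> = (\<Sum>i\<in>I. \<Sum>j\<in>J. \<Sum>a\<in>A. F a i * G a j)"
    by (rule sum.cong[OF refl], rule sum.swap)
  finally show ?thesis .
qed

lemma downsets_eq:
  fixes S T :: "'n::{finite,linorder} set"
  assumes S: "\<And>x y. x \<in> S \<Longrightarrow> y \<le> x \<Longrightarrow> y \<in> S"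
    and T: "\<And>x y. x \<in> T \<Longrightarrow> y \<le> x \<Longrightarrow> y \<in> T"
    and c: "card S = card T"
  shows "S = T"
proof -
  have "S \<subseteq> T \<or> T \<subseteq> S"
  proof (rule ccontr)
    assume "\<not> ?thesis"
    then obtain x y where "x \<in> S" "x \<notin> T" "y \<in> T" "y \<notin> S" by blast
    then show False using S[of x y] T[of y x] by (cases "y \<le> x") auto
  qed
  then show ?thesis using c card_subset_eq[of S T] card_subset_eq[of T S] by auto
qed


lemma eig_match:
  fixes U U' :: "((real, 'n::{finite,linorder}) vec, 'n) vec" and \<pi> :: "(real, 'n) vec"
    and g g' :: "'n \<Rightarrow> real"
  assumes pos: "\<And>i. \<pi> $ i > 0"
    and oU: "\<And>a b. (\<Sum>i\<in>UNIV. \<pi> $ i * U $ i $ a * U $ i $ b) = (if a = b then 1 else 0)"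
    and oU': "\<And>a b. (\<Sum>i\<in>UNIV. \<pi> $ i * U' $ i $ a * U' $ i $ b) = (if a = b then 1 else 0)"
    and rU: "\<And>i j. (\<Sum>a\<in>UNIV. U $ i $ a * U $ j $ a) = (if i = j then inverse (\<pi> $ i) else 0)"
    and rU': "\<And>i j. (\<Sum>a\<in>UNIV. U' $ i $ a * U' $ j $ a) = (if i = j then inverse (\<pi> $ i) else 0)"
    and N: "\<And>i j. (\<Sum>a\<in>UNIV. U $ i $ a * U $ j $ a * g a) = (\<Sum>a\<in>UNIV. U' $ i $ a * U' $ j $ a * g' a)"
    and mg: "\<And>a b. a \<le> b \<Longrightarrow> g b \<le> g a"
    and mg': "\<And>a b. a \<le> b \<Longrightarrow> g' b \<le> g' a"
  shows "g = g'" "\<And>a b. (\<Sum>i\<in>UNIV. \<pi> $ i * U' $ i $ a * U $ i $ b) \<noteq> 0 \<Longrightarrow> g' a = g b"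
proof -
  have pn: "\<pi> $ i \<noteq> 0" for i using pos[of i] by simp
  define W where "W a b = (\<Sum>i\<in>UNIV. \<pi> $ i * U' $ i $ a * U $ i $ b)" for a b
  have key: "W a b * g b = W a b * g' a" for a b
  proof -
    let ?S = "\<Sum>i\<in>UNIV. \<Sum>j\<in>UNIV. \<pi> $ i * U' $ i $ a * (\<pi> $ j * U $ j $ b) *
               (\<Sum>c\<in>UNIV. U $ i $ c * U $ j $ c * g c)"
    have "?S = (\<Sum>i\<in>UNIV. \<Sum>j\<in>UNIV. \<Sum>c\<in>UNIV. (\<pi> $ i * U' $ i $ a * U $ i $ c) *
               (\<pi> $ j * U $ j $ b * U $ j $ c) * g c)"
      by (simp add: sum_distrib_left mult_ac)
    also have "\<dots> = (\<Sum>c\<in>UNIV. g c * W a c * (if b = c then 1 else 0))"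
      unfolding sum3_fact W_def oU ..
    also have "\<dots> = W a b * g b" by (simp add: if_distrib[of "\<lambda>x. _ * x"] cong: if_cong)
    finally have 1: "?S = W a b * g b" .
    have "?S = (\<Sum>i\<in>UNIV. \<Sum>j\<in>UNIV. \<pi> $ i * U' $ i $ a * (\<pi> $ j * U $ j $ b) *
               (\<Sum>c\<in>UNIV. U' $ i $ c * U' $ j $ c * g' c))"
      by (simp only: N)
    also have "\<dots> = (\<Sum>i\<in>UNIV. \<Sum>j\<in>UNIV. \<Sum>c\<in>UNIV. (\<pi> $ i * U' $ i $ a * U' $ i $ c) *
               (\<pi> $ j * U' $ j $ c * U $ j $ b) * g' c)"
      by (simp add: sum_distrib_left mult_ac)
    also have "\<dots> = (\<Sum>c\<in>UNIV. g' c * (if a = c then 1 else 0) * W c b)"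
      unfolding sum3_fact W_def oU' ..
    also have "\<dots> = W a b * g' a" by (simp add: if_distrib[of "\<lambda>x. _ * x"] if_distrib[of "\<lambda>x. x * _"] cong: if_cong)
    finally show ?thesis using 1 by simp
  qed
  have WW1: "(\<Sum>a\<in>UNIV. W a b * W a c) = (if b = c then 1 else 0)" for b c
  proof -
    have "(\<Sum>a\<in>UNIV. W a b * W a c) = (\<Sum>i\<in>UNIV. \<Sum>j\<in>UNIV. \<Sum>a\<in>UNIV.
        (\<pi> $ i * U' $ i $ a * U $ i $ b) * (\<pi> $ j * U' $ j $ a * U $ j $ c))"
      unfolding W_def by (rule sum_prod_swap)
    also have "\<dots> = (\<Sum>i\<in>UNIV. \<Sum>j\<in>UNIV. \<pi> $ i * U $ i $ b * (\<pi> $ j * U $ j $ c) *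
        (\<Sum>a\<in>UNIV. U' $ i $ a * U' $ j $ a))"
      by (simp add: sum_distrib_left mult_ac)
    also have "\<dots> = (\<Sum>i\<in>UNIV. \<pi> $ i * U $ i $ b * U $ i $ c)"
      using pos by (simp add: rU' if_distrib[of "\<lambda>x. _ * x"] cong: if_cong) (simp add: field_simps pn)
    finally show ?thesis using oU by simp
  qed
  have WW2: "(\<Sum>b\<in>UNIV. W a b * W c b) = (if a = c then 1 else 0)" for a c
  proof -
    have "(\<Sum>b\<in>UNIV. W a b * W c b) = (\<Sum>i\<in>UNIV. \<Sum>j\<in>UNIV. \<Sum>b\<in>UNIV.
        (\<pi> $ i * U' $ i $ a * U $ i $ b) * (\<pi> $ j * U' $ j $ c * U $ j $ b))"
      unfolding W_def by (rule sum_prod_swap)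
    also have "\<dots> = (\<Sum>i\<in>UNIV. \<Sum>j\<in>UNIV. \<pi> $ i * U' $ i $ a * (\<pi> $ j * U' $ j $ c) *
        (\<Sum>b\<in>UNIV. U $ i $ b * U $ j $ b))"
      by (simp add: sum_distrib_left mult_ac)
    also have "\<dots> = (\<Sum>i\<in>UNIV. \<pi> $ i * U' $ i $ a * U' $ i $ c)"
      using pos by (simp add: rU if_distrib[of "\<lambda>x. _ * x"] cong: if_cong) (simp add: field_simps pn)
    finally show ?thesis using oU' by simp
  qed
  show eqv: "g' a = g b" if "(\<Sum>i\<in>UNIV. \<pi> $ i * U' $ i $ a * U $ i $ b) \<noteq> 0" for a b
    using key[of a b] that unfolding W_def by simp
  have cnt: "card {b. v \<le> g b} = card {a. v \<le> g' a}" for v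
  proof -
    have "real (card {b. v \<le> g b}) = (\<Sum>b\<in>UNIV. of_bool (v \<le> g b))"
      by simp
    also have "\<dots> = (\<Sum>b\<in>UNIV. of_bool (v \<le> g b) * (\<Sum>a\<in>UNIV. W a b * W a b))"
      by (simp add: WW1)
    also have "\<dots> = (\<Sum>b\<in>UNIV. \<Sum>a\<in>UNIV. of_bool (v \<le> g' a) * (W a b * W a b))"
      unfolding sum_distrib_left
    proof (intro sum.cong refl)
      fix a b
      show "of_bool (v \<le> g b) * (W a b * W a b) = of_bool (v \<le> g' a) * (W a b * W a b)"
        using key[of a b] by (cases "W a b = 0") auto
    qed
    also have "\<dots> = (\<Sum>a\<in>UNIV. of_bool (v \<le> g' a) * (\<Sum>b\<in>UNIV. W a b * W a b))"
      by (subst sum.swap) (simp add: sum_distrib_left)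
    also have "\<dots> = (\<Sum>a\<in>UNIV. of_bool (v \<le> g' a))"
      by (simp add: WW2)
    also have "\<dots> = real (card {a. v \<le> g' a})" by simp
    finally show ?thesis by linarith
  qed
  have sets: "{b. v \<le> g b} = {a. v \<le> g' a}" for v
    by (rule downsets_eq) (use mg mg' cnt in \<open>auto intro: order_trans\<close>)
  show "g = g'"
  proof
    fix a
    have "g a \<le> g' a" using sets[of "g a"] by blast
    moreover have "g' a \<le> g a" using sets[of "g' a"] by blast
    ultimately show "g a = g' a" by simp
  qed
qed


lemma U_transfer:
  fixes \<pi> :: "(real, 'n::{finite,linorder}) vec" and Q Q' U U' :: "((real, 'n) vec, 'n) vec"
  assumes D: "diagonalizes \<pi> Q U lam" and D': "diagonalizes \<pi> Q' U' lam'"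
    and pos: "\<And>i. \<pi> $ i > 0" and R: "rate_dist \<mu>" and R': "rate_dist \<mu>'"
    and t: "t > 0" and t': "t' > 0"
    and N: "\<And>i j. (\<Sum>a\<in>UNIV. U $ i $ a * U $ j $ a * Lap \<mu> (lam a * t))
               = (\<Sum>a\<in>UNIV. U' $ i $ a * U' $ j $ a * Lap \<mu>' (lam' a * t'))"
  shows "diagonalizes \<pi> Q' U lam'" "\<And>a. Lap \<mu> (lam a * t) = Lap \<mu>' (lam' a * t')"
proof -
  have lneg: "lam a * t \<le> 0" for a using diag_basic(6)[OF D pos] t by (simp add: mult_nonpos_nonneg)
  have lneg': "lam' a * t' \<le> 0" for a using diag_basic(6)[OF D' pos] t' by (simp add: mult_nonpos_nonneg)
  have mon: "lam b \<le> lam a" if "a \<le> b" for a b using D that unfolding diagonalizes_def by blast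
  have mon': "lam' b \<le> lam' a" if "a \<le> b" for a b using D' that unfolding diagonalizes_def by blast
  note EM = eig_match[OF pos diag_basic(5)[OF D pos] diag_basic(5)[OF D' pos]
      diag_rows[OF D] diag_rows[OF D'] N]
  have mg: "Lap \<mu> (lam b * t) \<le> Lap \<mu> (lam a * t)" if "a \<le> b" for a b
    by (rule Lap_mono[OF R _ lneg]) (use mon[OF that] t in simp)
  have mg': "Lap \<mu>' (lam' b * t') \<le> Lap \<mu>' (lam' a * t')" if "a \<le> b" for a b
    by (rule Lap_mono[OF R' _ lneg']) (use mon'[OF that] t' in simp)
  have geq: "(\<lambda>a. Lap \<mu> (lam a * t)) = (\<lambda>a. Lap \<mu>' (lam' a * t'))"
    using EM(1)[OF mg mg'] .
  then show "\<And>a. Lap \<mu> (lam a * t) = Lap \<mu>' (lam' a * t')" by metis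
  have comm: "lam' a = lam' b" if "(\<Sum>i\<in>UNIV. \<pi> $ i * U' $ i $ a * U $ i $ b) \<noteq> 0" for a b
  proof -
    have "Lap \<mu>' (lam' a * t') = Lap \<mu> (lam b * t)" using EM(2)[OF mg mg' that] .
    also have "\<dots> = Lap \<mu>' (lam' b * t')" using geq by metis
    finally have "lam' a * t' = lam' b * t'" using Lap_inj[OF R' lneg' lneg'] by blast
    then show ?thesis using t' by simp
  qed
  define V where "V = (\<chi> a i. U $ i $ a * \<pi> $ i)"
  define V' where "V' = (\<chi> a i. U' $ i $ a * \<pi> $ i)"
  note B = diag_basic[OF D pos, folded V_def]
  note B' = diag_basic[OF D' pos, folded V'_def]
  define Wm where "Wm = V' ** U"
  have Wm_nth: "Wm $ a $ b = (\<Sum>i\<in>UNIV. \<pi> $ i * U' $ i $ a * U $ i $ b)" for a b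
    unfolding Wm_def V'_def by (simp add: mmult_nth mult_ac)
  have UW: "U' ** Wm = U" unfolding Wm_def by (metis matrix_mul_assoc B'(1) matrix_mul_lid)
  have cm: "Wm ** diagm lam' = diagm lam' ** Wm"
  proof -
    have "Wm $ a $ b * lam' b = lam' a * Wm $ a $ b" for a b
    proof (cases "Wm $ a $ b = 0")
      case False
      then have "lam' a = lam' b" using comm[of a b] unfolding Wm_nth by blast
      then show ?thesis by simp
    qed simp
    then show ?thesis by (simp add: vec_eq_iff mult_diagm_nth diagm_mult_nth)
  qed
  have "U ** diagm lam' ** V = U' ** Wm ** diagm lam' ** V" by (simp add: UW)
  also have "\<dots> = U' ** diagm lam' ** Wm ** V" by (metis matrix_mul_assoc cm)
  also have "\<dots> = U' ** diagm lam' ** V' ** (U ** V)" unfolding Wm_def by (simp add: matrix_mul_assoc)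
  also have "\<dots> = Q'" by (simp add: B(1) B'(4))
  finally have Qeq: "Q' = U ** diagm lam' ** matrix_inv U" using B(3) by simp
  have d1: "lam' first_idx = 0 \<and> (\<forall>i. i \<noteq> first_idx \<longrightarrow> lam' i < 0) \<and>
     (\<forall>i j. i \<le> j \<longrightarrow> lam' j \<le> lam' i)" using D' unfolding diagonalizes_def by (elim conjE) (intro conjI)
  have d2: "U ** transpose U = diagm (\<lambda>i. inverse (\<pi> $ i)) \<and> (\<forall>l. U $ l $ first_idx = 1)"
    using D unfolding diagonalizes_def by (elim conjE) (intro conjI)
  show "diagonalizes \<pi> Q' U lam'"
    unfolding diagonalizes_def using Qeq d1 d2 by (intro conjI) ((elim conjE)?; assumption)+
qed

lemma vec_inv1:
  fixes U :: "((real, 'n::{finite,linorder}) vec, 'n) vec"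
  assumes oU: "\<And>a b. (\<Sum>i\<in>UNIV. \<pi> $ i * U $ i $ a * U $ i $ b) = (if a = b then 1 else 0)"
    and z: "\<And>i. (\<Sum>a\<in>UNIV. U $ i $ a * y a) = 0"
  shows "y a' = 0"
proof -
  have "y a' = (\<Sum>a\<in>UNIV. (\<Sum>i\<in>UNIV. \<pi> $ i * U $ i $ a' * U $ i $ a) * y a)"
    by (simp add: oU if_distrib[of "\<lambda>x. x * _"] cong: if_cong)
  also have "\<dots> = (\<Sum>i\<in>UNIV. \<pi> $ i * U $ i $ a' * (\<Sum>a\<in>UNIV. U $ i $ a * y a))"
    by (simp add: sum_distrib_left sum_distrib_right mult_ac) (rule sum.swap)
  also have "\<dots> = 0" by (simp add: z)
  finally show ?thesis .
qed

lemma tensor_inv: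
  fixes U :: "((real, 'n::{finite,linorder}) vec, 'n) vec"
  assumes oU: "\<And>a b. (\<Sum>i\<in>UNIV. \<pi> $ i * U $ i $ a * U $ i $ b) = (if a = b then 1 else 0)"
    and z: "\<And>i j k. (\<Sum>a\<in>UNIV. \<Sum>b\<in>UNIV. \<Sum>c\<in>UNIV. U $ i $ a * U $ j $ b * U $ k $ c * X a b c) = 0"
  shows "X a b c = 0"
proof -
  have s1: "(\<Sum>b\<in>UNIV. \<Sum>c\<in>UNIV. U $ j $ b * U $ k $ c * X a b c) = 0" for j k a
    by (rule vec_inv1[OF oU, of "\<lambda>a. \<Sum>b\<in>UNIV. \<Sum>c\<in>UNIV. U $ j $ b * U $ k $ c * X a b c"])
       (use z in \<open>simp add: sum_distrib_left mult_ac\<close>)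
  have s2: "(\<Sum>c\<in>UNIV. U $ k $ c * X a b c) = 0" for k a b
    by (rule vec_inv1[OF oU, of "\<lambda>b. \<Sum>c\<in>UNIV. U $ k $ c * X a b c"])
       (use s1 in \<open>simp add: sum_distrib_left mult_ac\<close>)
  show ?thesis
    by (rule vec_inv1[OF oU, of "\<lambda>c. X a b c"]) (use s2 in simp)
qed


lemma mv_add: "S *v (x + y) = S *v x + S *v y" for S :: "real^'n^'n"
  by (simp add: vec_eq_iff matrix_vector_mult_def sum.distrib algebra_simps)
lemma mv_scale: "S *v (c *\<^sub>R x) = c *\<^sub>R (S *v x)" for S :: "real^'n^'n"
  by (simp add: vec_eq_iff matrix_vector_mult_def sum_distrib_left algebra_simps)
lemma mv_diff: "S *v (x - y) = S *v x - S *v y" for S :: "real^'n^'n"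
  by (simp add: vec_eq_iff matrix_vector_mult_def sum_subtractf algebra_simps)

lemma sym_inner:
  fixes S :: "real^'n^'n"
  assumes sym: "\<And>i j. S $ i $ j = S $ j $ i"
  shows "(S *v x) \<bullet> y = x \<bullet> (S *v y)"
proof -
  have "(S *v x) \<bullet> y = (\<Sum>i\<in>UNIV. \<Sum>j\<in>UNIV. S $ i $ j * x $ j * y $ i)"
    by (simp add: inner_vec_def matrix_vector_mult_def sum_distrib_right)
  also have "\<dots> = (\<Sum>j\<in>UNIV. \<Sum>i\<in>UNIV. S $ i $ j * x $ j * y $ i)" by (rule sum.swap)
  also have "\<dots> = x \<bullet> (S *v y)"
    by (simp add: inner_vec_def matrix_vector_mult_def sum_distrib_left sym mult_ac)
  finally show ?thesis .
qed

lemma quad_zero: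
  fixes b A :: real
  assumes "\<And>t. b * t + A * t\<^sup>2 \<le> 0"
  shows "b = 0"
proof (rule ccontr)
  assume b: "b \<noteq> 0"
  define c where "c = 2 * (\<bar>A\<bar> + 1)"
  have c: "c > 0" "\<bar>A\<bar> < c / 2" unfolding c_def by auto
  define t where "t = b / c"
  have "b * t = b\<^sup>2 / c" unfolding t_def by (simp add: power2_eq_square)
  moreover have "A * t\<^sup>2 \<ge> - (\<bar>A\<bar> * t\<^sup>2)" by (simp add: abs_mult_pos)
  moreover have "\<bar>A\<bar> * t\<^sup>2 \<le> (c / 2) * t\<^sup>2" using c by (intro mult_right_mono) auto
  moreover have "(c / 2) * t\<^sup>2 = b\<^sup>2 / (2 * c)" unfolding t_def using c
    by (simp add: power2_eq_square field_simps)
  moreover have "b\<^sup>2 / c - b\<^sup>2 / (2 * c) > 0" using c b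
    by (simp add: field_simps)
  ultimately have "b * t + A * t\<^sup>2 > 0" by linarith
  then show False using assms[of t] by simp
qed

lemma greedy:
  fixes S :: "real^'n^'n"
  assumes sym: "\<And>i j. S $ i $ j = S $ j $ i"
  shows "k \<le> CARD('n) \<Longrightarrow> \<exists>v e. (\<forall>a<k. norm (v a) = 1 \<and> S *v v a = e a *\<^sub>R v a) \<and>
     (\<forall>a<k. \<forall>b<k. a \<noteq> b \<longrightarrow> v a \<bullet> v b = 0) \<and>
     (\<forall>a<k. \<forall>y. norm y = 1 \<longrightarrow> (\<forall>b<a. v b \<bullet> y = 0) \<longrightarrow> y \<bullet> (S *v y) \<le> e a)"
proof (induction k)
  case 0
  then show ?case by auto
next
  case (Suc k)
  then obtain v e where I1: "\<forall>a<k. norm (v a) = 1 \<and> S *v v a = e a *\<^sub>R v a"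
    and I2: "\<forall>a<k. \<forall>b<k. a \<noteq> b \<longrightarrow> v a \<bullet> v b = 0"
    and I3: "\<forall>a<k. \<forall>y. norm y = 1 \<longrightarrow> (\<forall>b<a. v b \<bullet> y = 0) \<longrightarrow> y \<bullet> (S *v y) \<le> e a"
    by auto
  have kn: "k < CARD('n)" using Suc.prems by simp
  define W where "W = {y. \<forall>b<k. v b \<bullet> y = 0}"
  define K where "K = {y. y \<in> W \<and> norm y = 1}"
  have W_add: "x + y \<in> W" if "x \<in> W" "y \<in> W" for x y
    using that unfolding W_def by (simp add: inner_add_right)
  have W_scale: "c *\<^sub>R x \<in> W" if "x \<in> W" for x c
    using that unfolding W_def by simp
  have W_diff: "x - y \<in> W" if "x \<in> W" "y \<in> W" for x y
    using that unfolding W_def by (simp add: inner_diff_right)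
  have W_inv: "S *v y \<in> W" if "y \<in> W" for y
    using that I1 unfolding W_def by (simp add: sym_inner[OF sym, symmetric])
  have Kc: "compact K"
  proof -
    have "K = sphere 0 1 \<inter> (\<Inter>b\<in>{..<k}. {y. v b \<bullet> y = 0})"
      unfolding K_def W_def by auto
    moreover have "closed (\<Inter>b\<in>{..<k}. {y. v b \<bullet> y = 0})"
      by (intro closed_INT ballI closed_hyperplane)
    ultimately show ?thesis by (simp add: compact_Int_closed)
  qed
  have Kne: "K \<noteq> {}"
  proof -
    have "span (v ` {..<k}) \<noteq> UNIV"
    proof
      assume "span (v ` {..<k}) = UNIV"
      then have "dim (UNIV :: (real^'n) set) \<le> card (v ` {..<k})"
        by (intro dim_le_card) auto
      also have "\<dots> \<le> k" using card_image_le[of "{..<k}" v] by simp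
      finally show False using kn by simp
    qed
    then obtain a :: "real^'n" where a: "a \<noteq> 0" "\<forall>x\<in>span (v ` {..<k}). a \<bullet> x = 0"
      using span_not_UNIV_orthogonal by blast
    have "(1 / norm a) *\<^sub>R a \<in> K"
      using a unfolding K_def W_def by (auto simp: span_base inner_commute)
    then show ?thesis by blast
  qed
  have cont: "continuous_on K (\<lambda>y. y \<bullet> (S *v y))"
    by (intro continuous_intros)
  obtain u where uK: "u \<in> K" and umax: "\<And>y. y \<in> K \<Longrightarrow> y \<bullet> (S *v y) \<le> u \<bullet> (S *v u)"
    using continuous_attains_sup[OF Kc Kne cont] by blast
  define ek where "ek = u \<bullet> (S *v u)"
  have uW: "u \<in> W" and un: "norm u = 1" using uK unfolding K_def by auto
  have uu: "u \<bullet> u = 1" using un by (simp add: norm_eq_1)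
  have bnd: "y \<bullet> (S *v y) \<le> ek * (y \<bullet> y)" if "y \<in> W" for y
  proof (cases "y = 0")
    case True then show ?thesis by simp
  next
    case False
    define z where "z = (1 / norm y) *\<^sub>R y"
    have "z \<in> K" unfolding K_def z_def using W_scale[OF that] False by auto
    then have "z \<bullet> (S *v z) \<le> ek" using umax unfolding ek_def by blast
    moreover have "z \<bullet> (S *v z) = (y \<bullet> (S *v y)) / (norm y)\<^sup>2"
      unfolding z_def by (simp add: mv_scale power2_eq_square)
    moreover have "(norm y)\<^sup>2 = y \<bullet> y" by (simp add: power2_norm_eq_inner)
    moreover have "norm y > 0" using False by simp
    ultimately show ?thesis by (simp add: divide_le_eq mult.commute)
  qed
  have orthw: "w \<bullet> (S *v u - ek *\<^sub>R u) = 0" if "w \<in> W" for w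
  proof -
    let ?b = "2 * (w \<bullet> (S *v u - ek *\<^sub>R u))"
    let ?A = "w \<bullet> (S *v w) - ek * (w \<bullet> w)"
    have "?b * t + ?A * t\<^sup>2 \<le> 0" for t
    proof -
      have yW: "u + t *\<^sub>R w \<in> W" using W_add[OF uW W_scale[OF that]] .
      have e1: "u \<bullet> (S *v w) = w \<bullet> (S *v u)"
        by (metis sym_inner[OF sym] inner_commute)
      have "(u + t *\<^sub>R w) \<bullet> (S *v (u + t *\<^sub>R w)) =
          ek + 2 * t * (w \<bullet> (S *v u)) + t\<^sup>2 * (w \<bullet> (S *v w))"
        unfolding ek_def mv_add mv_scale inner_add_left inner_add_right inner_scaleR_left inner_scaleR_right e1
        by (simp add: power2_eq_square algebra_simps)
      moreover have "(u + t *\<^sub>R w) \<bullet> (u + t *\<^sub>R w) = 1 + 2 * t * (w \<bullet> u) + t\<^sup>2 * (w \<bullet> w)"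
        unfolding inner_add_left inner_add_right inner_scaleR_left inner_scaleR_right inner_commute[of u w] uu
        by (simp add: power2_eq_square algebra_simps)
      ultimately have "ek + 2 * t * (w \<bullet> (S *v u)) + t\<^sup>2 * (w \<bullet> (S *v w))
          \<le> ek * (1 + 2 * t * (w \<bullet> u) + t\<^sup>2 * (w \<bullet> w))"
        using bnd[OF yW] by simp
      then show ?thesis
        by (simp add: inner_diff_right algebra_simps power2_eq_square)
    qed
    then have "?b = 0" by (rule quad_zero)
    then show ?thesis by simp
  qed
  have eig: "S *v u = ek *\<^sub>R u"
  proof -
    have "S *v u - ek *\<^sub>R u \<in> W" using W_diff[OF W_inv[OF uW] W_scale[OF uW]] .
    from orthw[OF this] show ?thesis by simp
  qed
  define v' where "v' = v(k := u)"
  define e' where "e' = e(k := ek)"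
  show ?case
  proof (intro exI[of _ v'] exI[of _ e'] conjI allI impI)
    fix a assume "a < Suc k"
    then show "norm (v' a) = 1" "S *v v' a = e' a *\<^sub>R v' a"
      using I1 un eig unfolding v'_def e'_def by (cases "a = k"; simp)+
  next
    fix a b assume ab: "a < Suc k" "b < Suc k" "a \<noteq> b"
    show "v' a \<bullet> v' b = 0"
    proof (cases "a = k")
      case True then show ?thesis using ab uW unfolding v'_def W_def by (simp add: inner_commute)
    next
      case False
      show ?thesis
      proof (cases "b = k")
        case True then show ?thesis using ab uW False unfolding v'_def W_def by simp
      next
        case False2: False
        then show ?thesis using ab False I2 unfolding v'_def by simp
      qed
    qed
  next
    fix a y assume a: "a < Suc k" and y: "norm y = 1" and orth: "\<forall>b<a. v' b \<bullet> y = 0"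
    show "y \<bullet> (S *v y) \<le> e' a"
    proof (cases "a = k")
      case True
      have "y \<in> K" using orth y True unfolding K_def W_def v'_def by auto
      then show ?thesis using umax True unfolding e'_def ek_def by simp
    next
      case False
      then have "a < k" using a by simp
      moreover have "\<forall>b<a. v b \<bullet> y = 0" using orth \<open>a < k\<close> unfolding v'_def by auto
      ultimately show ?thesis using I3 y unfolding e'_def by simp
    qed
  qed
qed


lemma uut_inv:
  fixes \<pi> :: "(real, 'n::{finite,linorder}) vec" and U :: "((real, 'n) vec, 'n) vec"
  assumes UUt: "U ** transpose U = diagm (\<lambda>i. inverse (\<pi> $ i))" and pos: "\<And>i. \<pi> $ i > 0"
  defines "V \<equiv> (\<chi> a i. U $ i $ a * \<pi> $ i)"
  shows "U ** V = mat 1" "matrix_inv U = V"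
proof -
  show UV: "U ** V = mat 1"
  proof -
    have "(U ** V) $ l $ m = (if l = m then 1 else 0)" for l m
    proof -
      have "(U ** V) $ l $ m = (U ** transpose U) $ l $ m * \<pi> $ m"
        by (simp add: mmult_nth V_def transpose_def sum_distrib_right mult.assoc)
      also have "\<dots> = (if l = m then 1 else 0)"
        using pos[of m] by (simp add: UUt diagm_nth)
      finally show ?thesis .
    qed
    then show ?thesis by (simp add: vec_eq_iff mat_def)
  qed
  have VU: "V ** U = mat 1" using UV matrix_left_right_inverse by blast
  show "matrix_inv U = V"
  proof -
    have "U ** matrix_inv U = mat 1 \<and> matrix_inv U ** U = mat 1"
      unfolding matrix_inv_def by (rule someI[of _ V]) (use UV VU in blast)
    then have "matrix_inv U = V ** (U ** matrix_inv U)" by (metis VU matrix_mul_assoc matrix_mul_lid)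
    also have "\<dots> = V" using \<open>U ** matrix_inv U = mat 1 \<and> _\<close>  by simp
    finally show ?thesis .
  qed
qed

lemma dirichlet:
  fixes \<pi> :: "(real, 'n::{finite,linorder}) vec" and Q :: "((real, 'n) vec, 'n) vec"
  assumes G: "GTR \<pi> Q"
  shows "(\<Sum>i\<in>UNIV. \<Sum>j\<in>UNIV. \<pi> $ i * Q $ i $ j * x i * x j)
       = - (1/2) * (\<Sum>i\<in>UNIV. \<Sum>j\<in>UNIV. \<pi> $ i * Q $ i $ j * (x i - x j)\<^sup>2)"
proof -
  have rs: "(\<Sum>j\<in>UNIV. Q $ i $ j) = 0" for i using G unfolding GTR_def by blast
  have rev: "\<pi> $ i * Q $ i $ j = \<pi> $ j * Q $ j $ i" for i j using G unfolding GTR_def by blast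
  have B1: "(\<Sum>i\<in>UNIV. \<Sum>j\<in>UNIV. \<pi> $ i * Q $ i $ j * (x i)\<^sup>2) = 0"
    by (simp add: sum_distrib_left[symmetric] sum_distrib_right[symmetric] rs mult.commute[of _ "(x _)\<^sup>2"] mult.assoc)
  have "(\<Sum>i\<in>UNIV. \<Sum>j\<in>UNIV. \<pi> $ i * Q $ i $ j * (x j)\<^sup>2) = (\<Sum>i\<in>UNIV. \<Sum>j\<in>UNIV. \<pi> $ j * Q $ j $ i * (x j)\<^sup>2)"
    by (simp add: rev)
  also have "\<dots> = (\<Sum>j\<in>UNIV. \<Sum>i\<in>UNIV. \<pi> $ j * Q $ j $ i * (x j)\<^sup>2)" by (rule sum.swap)
  also have "\<dots> = 0" using B1 by simp
  finally have B2: "(\<Sum>i\<in>UNIV. \<Sum>j\<in>UNIV. \<pi> $ i * Q $ i $ j * (x j)\<^sup>2) = 0" .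
  have "(\<Sum>i\<in>UNIV. \<Sum>j\<in>UNIV. \<pi> $ i * Q $ i $ j * (x i - x j)\<^sup>2)
     = (\<Sum>i\<in>UNIV. \<Sum>j\<in>UNIV. \<pi> $ i * Q $ i $ j * (x i)\<^sup>2)
       + (\<Sum>i\<in>UNIV. \<Sum>j\<in>UNIV. \<pi> $ i * Q $ i $ j * (x j)\<^sup>2)
       - 2 * (\<Sum>i\<in>UNIV. \<Sum>j\<in>UNIV. \<pi> $ i * Q $ i $ j * x i * x j)"
    by (simp add: sum.distrib[symmetric] sum_subtractf[symmetric] sum_distrib_left power2_eq_square algebra_simps)
  then show ?thesis using B1 B2 by simp
qed

lemma dirichlet_le:
  fixes \<pi> :: "(real, 'n::{finite,linorder}) vec" and Q :: "((real, 'n) vec, 'n) vec"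
  assumes G: "GTR \<pi> Q"
  shows "(\<Sum>i\<in>UNIV. \<Sum>j\<in>UNIV. \<pi> $ i * Q $ i $ j * x i * x j) \<le> 0"
    and "(\<Sum>i\<in>UNIV. \<Sum>j\<in>UNIV. \<pi> $ i * Q $ i $ j * x i * x j) = 0 \<Longrightarrow> x i = x j"
proof -
  have T: "0 \<le> \<pi> $ i * Q $ i $ j * (x i - x j)\<^sup>2" for i j
  proof (cases "i = j")
    case False
    then have "\<pi> $ i * Q $ i $ j > 0" using G unfolding GTR_def by (simp add: mult_pos_pos)
    then show ?thesis by simp
  qed simp
  have nn: "0 \<le> (\<Sum>i\<in>UNIV. \<Sum>j\<in>UNIV. \<pi> $ i * Q $ i $ j * (x i - x j)\<^sup>2)"
    by (intro sum_nonneg T)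
  then show "(\<Sum>i\<in>UNIV. \<Sum>j\<in>UNIV. \<pi> $ i * Q $ i $ j * x i * x j) \<le> 0"
    unfolding dirichlet[OF G] by simp
  assume z: "(\<Sum>i\<in>UNIV. \<Sum>j\<in>UNIV. \<pi> $ i * Q $ i $ j * x i * x j) = 0"
  then have "(\<Sum>i\<in>UNIV. \<Sum>j\<in>UNIV. \<pi> $ i * Q $ i $ j * (x i - x j)\<^sup>2) = 0"
    unfolding dirichlet[OF G] by simp
  then have "(\<Sum>j\<in>UNIV. \<pi> $ i * Q $ i $ j * (x i - x j)\<^sup>2) = 0"
    using sum_nonneg_eq_0_iff[of UNIV "\<lambda>i. \<Sum>j\<in>UNIV. \<pi> $ i * Q $ i $ j * (x i - x j)\<^sup>2"] T
    by (simp add: sum_nonneg)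
  then have t0: "\<pi> $ i * Q $ i $ j * (x i - x j)\<^sup>2 = 0"
    by (subst (asm) sum_nonneg_eq_0_iff) (auto intro: T)
  show "x i = x j"
  proof (cases "i = j")
    case False
    then have "\<pi> $ i * Q $ i $ j > 0" using G unfolding GTR_def by (simp add: mult_pos_pos)
    then show ?thesis using t0 by auto
  qed simp
qed

definition idx :: "'n::{finite,linorder} \<Rightarrow> nat" where
  "idx i = card {j. j < i}"

lemma idx_less: "i < j \<Longrightarrow> idx i < idx j"
  unfolding idx_def by (rule psubset_card_mono) auto

lemma idx_bound: "idx (i::'n::{finite,linorder}) < CARD('n)"
  unfolding idx_def by (rule psubset_card_mono) auto

lemma idx_mono: "i \<le> j \<Longrightarrow> idx i \<le> idx j"
  using idx_less[of i j] by (metis order.order_iff_strict less_imp_le)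

lemma idx_inj: "inj idx"
  by (rule injI) (metis idx_less less_irrefl linorder_neqE)

lemma idx_first: "idx (first_idx :: 'n::{finite,linorder}) = 0"
proof -
  have "first_idx = Min (UNIV :: 'n set)" unfolding first_idx_def
    by (rule Least_equality) auto
  then have "first_idx \<le> j" for j :: 'n by (metis Min_le finite UNIV_I)
  then show ?thesis unfolding idx_def by (auto simp: not_less[symmetric])
qed


lemma exists_diag2:
  fixes \<pi> :: "(real, 'n::{finite,linorder}) vec" and Q :: "((real, 'n) vec, 'n) vec"
  assumes G: "GTR \<pi> Q" shows "\<exists>U lam. diagonalizes \<pi> Q U lam"
proof -
  have pos: "\<pi> $ i > 0" for i using G unfolding GTR_def by blast
  have sum1: "(\<Sum>i\<in>UNIV. \<pi> $ i) = 1" using G unfolding GTR_def by blast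
  have rs: "(\<Sum>j\<in>UNIV. Q $ i $ j) = 0" for i using G unfolding GTR_def by blast
  have rev: "\<pi> $ i * Q $ i $ j = \<pi> $ j * Q $ j $ i" for i j using G unfolding GTR_def by blast
  define s where "s l = sqrt (\<pi> $ l)" for l
  have spos: "s l > 0" for l unfolding s_def using pos by simp
  have ss: "s l * s l = \<pi> $ l" for l unfolding s_def using pos[of l] by simp
  have sne: "s l \<noteq> 0" for l using spos[of l] by simp
  define S :: "((real, 'n) vec, 'n) vec" where "S = (\<chi> i j. s i * Q $ i $ j / s j)"
  have sym: "S $ i $ j = S $ j $ i" for i j
  proof -
    have "s i * Q $ i $ j / s j = (\<pi> $ i * Q $ i $ j) / (s i * s j)"
      using sne by (simp add: ss[symmetric] field_simps)
    also have "\<dots> = (\<pi> $ j * Q $ j $ i) / (s j * s i)" by (simp add: rev mult.commute)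
    also have "\<dots> = s j * Q $ j $ i / s i"
      using sne by (simp add: ss[symmetric] field_simps)
    finally show ?thesis unfolding S_def by simp
  qed
  have qf: "y \<bullet> (S *v y) = (\<Sum>i\<in>UNIV. \<Sum>j\<in>UNIV. \<pi> $ i * Q $ i $ j * (y $ i / s i) * (y $ j / s j))" for y
  proof -
    have "y \<bullet> (S *v y) = (\<Sum>i\<in>UNIV. \<Sum>j\<in>UNIV. y $ i * (s i * Q $ i $ j / s j) * y $ j)"
      unfolding inner_vec_def matrix_vector_mult_def S_def by (simp add: sum_distrib_left mult_ac)
    also have "\<dots> = (\<Sum>i\<in>UNIV. \<Sum>j\<in>UNIV. \<pi> $ i * Q $ i $ j * (y $ i / s i) * (y $ j / s j))"
      by (intro sum.cong refl) (use sne in \<open>simp add: ss[symmetric] field_simps\<close>)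
    finally show ?thesis .
  qed
  have qf_le: "y \<bullet> (S *v y) \<le> 0" for y
    unfolding qf by (rule dirichlet_le(1)[OF G])
  define \<sigma> :: "(real, 'n) vec" where "\<sigma> = (\<chi> l. s l)"
  have qf_zero: "y = (y $ first_idx / s first_idx) *\<^sub>R \<sigma>" if "y \<bullet> (S *v y) = 0" for y
  proof -
    have "y $ l / s l = y $ first_idx / s first_idx" for l
      using dirichlet_le(2)[OF G, of "\<lambda>l. y $ l / s l"] that unfolding qf by blast
    then show ?thesis unfolding \<sigma>_def using sne by (simp add: vec_eq_iff field_simps)
  qed
  have \<sigma>\<sigma>: "\<sigma> \<bullet> \<sigma> = 1" unfolding \<sigma>_def inner_vec_def using sum1 by (simp add: ss)
  have \<sigma>n: "norm \<sigma> = 1" using \<sigma>\<sigma> by (simp add: norm_eq_1)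
  have S\<sigma>: "S *v \<sigma> = 0"
    unfolding S_def \<sigma>_def matrix_vector_mult_def using sne
    by (simp add: vec_eq_iff sum_distrib_left[symmetric] rs)
  have qf\<sigma>: "\<sigma> \<bullet> (S *v \<sigma>) = 0" by (simp add: S\<sigma>)
  define n where "n = CARD('n)"
  have n0: "0 < n" unfolding n_def by simp
  obtain v e where G1: "\<forall>a<n. norm (v a) = 1 \<and> S *v v a = e a *\<^sub>R v a"
    and G2: "\<forall>a<n. \<forall>b<n. a \<noteq> b \<longrightarrow> v a \<bullet> v b = 0"
    and G3: "\<forall>a<n. \<forall>y. norm y = 1 \<longrightarrow> (\<forall>b<a. v b \<bullet> y = 0) \<longrightarrow> y \<bullet> (S *v y) \<le> e a"
    using greedy[OF sym, of n] unfolding n_def by auto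
  have qfv: "v a \<bullet> (S *v v a) = e a" if "a < n" for a
    using G1 that by (simp add: norm_eq_1)
  have anti: "e a \<le> e b" if "b \<le> a" "a < n" for a b
  proof (cases "a = b")
    case False
    then have "b < a" using that by simp
    have "\<forall>c<b. v c \<bullet> v a = 0" using G2 \<open>b < a\<close> \<open>a < n\<close> by auto
    moreover have "b < n" using \<open>b < a\<close> \<open>a < n\<close> by simp
    moreover have "norm (v a) = 1" using G1 \<open>a < n\<close> by simp
    ultimately have "v a \<bullet> (S *v v a) \<le> e b" using G3 by blast
    then show ?thesis using qfv[OF \<open>a < n\<close>] by simp
  qed simp
  have e0: "e 0 = 0"
  proof -
    have "\<sigma> \<bullet> (S *v \<sigma>) \<le> e 0" using G3 n0 \<sigma>n by auto
    moreover have "e 0 \<le> 0" using qfv[OF n0] qf_le[of "v 0"] by simp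
    ultimately show ?thesis using qf\<sigma> by simp
  qed
  obtain c0 where c0: "v 0 = c0 *\<^sub>R \<sigma>"
    using qf_zero[of "v 0"] qfv[OF n0] e0 by metis
  have c0ne: "c0 \<noteq> 0" using G1 n0 c0 by auto
  have v\<sigma>: "v a \<bullet> \<sigma> = 0" if "0 < a" "a < n" for a
  proof -
    have "v a \<bullet> v 0 = 0" using G2 that n0 by auto
    then show ?thesis using c0 c0ne by simp
  qed
  have eneg: "e a < 0" if ha: "0 < a" "a < n" for a
  proof -
    have le: "e a \<le> 0" using anti[of 0 a] ha e0 by simp
    have "e a \<noteq> 0"
    proof
      assume "e a = 0"
      then obtain c where c: "v a = c *\<^sub>R \<sigma>" using qf_zero[of "v a"] qfv[OF ha(2)] by metis
      then have "c = 0" using v\<sigma>[OF ha] \<sigma>\<sigma> by simp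
      then show False using c G1 ha by auto
    qed
    then show ?thesis using le by simp
  qed
  define w where "w a = (if a = 0 then \<sigma> else v a)" for a
  have W1: "norm (w a) = 1" "S *v w a = e a *\<^sub>R w a" if "a < n" for a
    using G1 that \<sigma>n S\<sigma> e0 unfolding w_def by auto
  have W2: "w a \<bullet> w b = 0" if "a < n" "b < n" "a \<noteq> b" for a b
  proof (cases "a = 0")
    case True
    then show ?thesis using that v\<sigma>[of b] unfolding w_def by (simp add: inner_commute)
  next
    case False
    show ?thesis
    proof (cases "b = 0")
      case True
      then show ?thesis using that v\<sigma>[of a] False unfolding w_def by simp
    next
      case False2: False
      then show ?thesis using that False G2 unfolding w_def by simp
    qed
  qed
  have ww: "w a \<bullet> w a = 1" if "a < n" for a using W1(1)[OF that] by (simp add: norm_eq_1)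
  have idxn: "idx a < n" for a :: 'n unfolding n_def by (rule idx_bound)
  define U :: "((real, 'n) vec, 'n) vec" where "U = (\<chi> l a. w (idx a) $ l / s l)"
  define lam where "lam a = e (idx a)" for a :: 'n
  define Vm :: "((real, 'n) vec, 'n) vec" where "Vm = (\<chi> l a. w (idx a) $ l)"
  have VtV: "transpose Vm ** Vm = mat 1"
  proof -
    have "(transpose Vm ** Vm) $ a $ b = (if a = b then 1 else 0)" for a b
    proof -
      have "(transpose Vm ** Vm) $ a $ b = w (idx a) \<bullet> w (idx b)"
        unfolding Vm_def by (simp add: mmult_nth transpose_def inner_vec_def)
      also have "\<dots> = (if a = b then 1 else 0)"
        using ww[OF idxn] W2[OF idxn idxn] idx_inj by (metis injD)
      finally show ?thesis .
    qed
    then show ?thesis by (simp add: vec_eq_iff mat_def)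
  qed
  then have VVt: "Vm ** transpose Vm = mat 1" using matrix_left_right_inverse by blast
  have UUt: "U ** transpose U = diagm (\<lambda>i. inverse (\<pi> $ i))"
  proof -
    have "(U ** transpose U) $ l $ m = (Vm ** transpose Vm) $ l $ m / (s l * s m)" for l m
      unfolding U_def Vm_def by (simp add: mmult_nth transpose_def sum_divide_distrib)
    then have "(U ** transpose U) $ l $ m = (if l = m then 1 else 0) / (s l * s m)" for l m
      using VVt by (simp add: mat_def)
    then show ?thesis
      by (simp add: vec_eq_iff diagm_nth divide_inverse ss[symmetric] inverse_mult_distrib)
  qed
  have QU: "Q ** U = U ** diagm lam"
  proof -
    have "(Q ** U) $ l $ a = U $ l $ a * lam a" for l a
    proof -
      have "(S *v w (idx a)) $ l = e (idx a) * w (idx a) $ l" using W1(2)[OF idxn] by simp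
      then have "(\<Sum>m\<in>UNIV. s l * Q $ l $ m / s m * w (idx a) $ m) = e (idx a) * w (idx a) $ l"
        unfolding S_def matrix_vector_mult_def by simp
      then have "s l * (\<Sum>m\<in>UNIV. Q $ l $ m * (w (idx a) $ m / s m)) = e (idx a) * w (idx a) $ l"
        by (simp add: sum_distrib_left mult_ac)
      then have "(\<Sum>m\<in>UNIV. Q $ l $ m * (w (idx a) $ m / s m)) = e (idx a) * w (idx a) $ l / s l"
        using sne[of l] by (simp add: field_simps)
      then show ?thesis unfolding U_def lam_def by (simp add: mmult_nth)
    qed
    then show ?thesis by (simp add: vec_eq_iff mult_diagm_nth)
  qed
  define V where "V = (\<chi> a i. U $ i $ a * \<pi> $ i)"
  note UI = uut_inv[OF UUt pos, folded V_def]
  have "Q = Q ** (U ** V)" using UI(1) by simp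
  also have "\<dots> = U ** diagm lam ** V" by (metis QU matrix_mul_assoc)
  finally have Qeq: "Q = U ** diagm lam ** matrix_inv U" using UI(2) by simp
  have d3: "lam first_idx = 0" unfolding lam_def idx_first e0 ..
  have d4: "\<forall>i. i \<noteq> first_idx \<longrightarrow> lam i < 0"
  proof (intro allI impI)
    fix i :: 'n assume "i \<noteq> first_idx"
    then have "idx i \<noteq> 0" using idx_first idx_inj by (metis inj_eq)
    then show "lam i < 0" unfolding lam_def using eneg idxn by auto
  qed
  have d5: "\<forall>i j. i \<le> j \<longrightarrow> lam j \<le> lam i"
    unfolding lam_def using anti idx_mono idxn by blast
  have d6: "\<forall>l. U $ l $ first_idx = 1"
    unfolding U_def w_def \<sigma>_def using sne by (simp add: idx_first)
  have "diagonalizes \<pi> Q U lam"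
    unfolding diagonalizes_def using Qeq d3 d4 d5 UUt d6 by (intro conjI)
  then show ?thesis by blast
qed


lemma exists_diag:
  fixes \<pi> :: "(real, 'n::{finite,linorder}) vec" and Q :: "((real, 'n) vec, 'n) vec"
  assumes "GTR \<pi> Q" shows "\<exists>U lam. diagonalizes \<pi> Q U lam"
  using exists_diag2[OF assms] .

lemma pair_N:
  fixes \<pi> :: "(real, 'n::{finite,linorder}) vec" and Q Q' U U' :: "((real, 'n) vec, 'n) vec"
  assumes D: "diagonalizes \<pi> Q U lam" and D': "diagonalizes \<pi> Q' U' lam'"
    and pos: "\<And>i. \<pi> $ i > 0" and R: "rate_dist \<mu>" and R': "rate_dist \<mu>'"
    and t: "ta \<ge> 0" "tb \<ge> 0" "tc \<ge> 0" and t': "ta' \<ge> 0" "tb' \<ge> 0" "tc' \<ge> 0"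
    and sameP: "\<And>i j k. jointP \<pi> Q \<mu> ta tb tc i j k = jointP \<pi> Q' \<mu>' ta' tb' tc' i j k"
  shows "(\<Sum>a\<in>UNIV. U $ i $ a * U $ j $ a * Lap \<mu> (lam a * (ta + tb)))
       = (\<Sum>a\<in>UNIV. U' $ i $ a * U' $ j $ a * Lap \<mu>' (lam' a * (ta' + tb')))"
proof -
  have "\<pi> $ i * \<pi> $ j * (\<Sum>a\<in>UNIV. U $ i $ a * U $ j $ a * Lap \<mu> (lam a * (ta + tb)))
     = \<pi> $ i * \<pi> $ j * (\<Sum>a\<in>UNIV. U' $ i $ a * U' $ j $ a * Lap \<mu>' (lam' a * (ta' + tb')))"
    unfolding marg2[OF D pos R t, symmetric] marg2[OF D' pos R' t', symmetric] sameP ..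
  moreover have "\<pi> $ i * \<pi> $ j \<noteq> 0" using pos[of i] pos[of j] by simp
  ultimately show ?thesis by simp
qed

lemma main_same:
  fixes \<pi> :: "(real, 'n::{finite,linorder}) vec" and Q Q' U0 U1 :: "((real, 'n) vec, 'n) vec"
  assumes pos: "\<And>i. \<pi> $ i > 0" and R: "rate_dist \<mu>" and R': "rate_dist \<mu>'"
    and E: "edges_ok ta tb tc" and E': "edges_ok ta' tb' tc'"
    and D0: "diagonalizes \<pi> Q U0 lam0" and D1: "diagonalizes \<pi> Q' U1 lam1"
    and sameP: "\<And>i j k. jointP \<pi> Q \<mu> ta tb tc i j k = jointP \<pi> Q' \<mu>' ta' tb' tc' i j k"
  shows "{U. \<exists>lam. diagonalizes \<pi> Q U lam} = {U. \<exists>lam. diagonalizes \<pi> Q' U lam} \<and>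
    (\<forall>U lam U' lam' i. diagonalizes \<pi> Q U lam \<longrightarrow> diagonalizes \<pi> Q' U' lam' \<longrightarrow>
        Lap \<mu> (lam i * (ta + tb)) = Lap \<mu>' (lam' i * (ta' + tb')) \<and>
        Lap \<mu> (lam i * (ta + tc)) = Lap \<mu>' (lam' i * (ta' + tc')) \<and>
        Lap \<mu> (lam i * (tb + tc)) = Lap \<mu>' (lam' i * (tb' + tc'))) \<and>
    (\<exists>U lam lam'. diagonalizes \<pi> Q U lam \<and> diagonalizes \<pi> Q' U lam' \<and>
        (\<forall>i j k. nu \<pi> U i j k \<noteq> 0 \<longrightarrow>
           Lap \<mu> (lam i * ta + lam j * tb + lam k * tc)
           = Lap \<mu>' (lam' i * ta' + lam' j * tb' + lam' k * tc')))"
proof -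
  have t: "ta \<ge> 0" "tb \<ge> 0" "tc \<ge> 0" "ta + tb > 0" "ta + tc > 0" "tb + tc > 0"
    using E unfolding edges_ok_def by auto
  have t': "ta' \<ge> 0" "tb' \<ge> 0" "tc' \<ge> 0" "ta' + tb' > 0" "ta' + tc' > 0" "tb' + tc' > 0"
    using E' unfolding edges_ok_def by auto
  have sameP1: "jointP \<pi> Q \<mu> ta tc tb i j k = jointP \<pi> Q' \<mu>' ta' tc' tb' i j k" for i j k
    using sameP[of i k j] jointP_perm1 by metis
  have sameP2: "jointP \<pi> Q \<mu> tb tc ta i j k = jointP \<pi> Q' \<mu>' tb' tc' ta' i j k" for i j k
    using sameP[of k i j] jointP_perm2 by metis
  note NAB = pair_N[OF _ _ pos R R' t(1,2,3) t'(1,2,3) sameP]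
  note NAC = pair_N[OF _ _ pos R R' t(1,3,2) t'(1,3,2) sameP1]
  note NBC = pair_N[OF _ _ pos R R' t(2,3,1) t'(2,3,1) sameP2]
  have NAB': "(\<Sum>a\<in>UNIV. U $ i $ a * U $ j $ a * Lap \<mu>' (lam a * (ta' + tb')))
       = (\<Sum>a\<in>UNIV. U' $ i $ a * U' $ j $ a * Lap \<mu> (lam' a * (ta + tb)))"
    if "diagonalizes \<pi> Q' U lam" "diagonalizes \<pi> Q U' lam'" for U U' lam lam' i j
    using NAB[OF that(2,1)] by simp
  have seteq: "{U. \<exists>lam. diagonalizes \<pi> Q U lam} = {U. \<exists>lam. diagonalizes \<pi> Q' U lam}"
  proof (intro set_eqI iffI; clarsimp)
    fix U lam assume D: "diagonalizes \<pi> Q U lam"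
    show "\<exists>lam. diagonalizes \<pi> Q' U lam"
      using U_transfer(1)[OF D D1 pos R R' t(4) t'(4) NAB[OF D D1]] by blast
  next
    fix U lam assume D: "diagonalizes \<pi> Q' U lam"
    show "\<exists>lam. diagonalizes \<pi> Q U lam"
      using U_transfer(1)[OF D D0 pos R' R t'(4) t(4) NAB'[OF D D0]] by blast
  qed
  have lapeq: "Lap \<mu> (lam i * (ta + tb)) = Lap \<mu>' (lam' i * (ta' + tb')) \<and>
        Lap \<mu> (lam i * (ta + tc)) = Lap \<mu>' (lam' i * (ta' + tc')) \<and>
        Lap \<mu> (lam i * (tb + tc)) = Lap \<mu>' (lam' i * (tb' + tc'))"
    if D: "diagonalizes \<pi> Q U lam" and D': "diagonalizes \<pi> Q' U' lam'" for U lam U' lam' i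
    using U_transfer(2)[OF D D' pos R R' t(4) t'(4) NAB[OF D D']]
      U_transfer(2)[OF D D' pos R R' t(5) t'(5) NAC[OF D D']]
      U_transfer(2)[OF D D' pos R R' t(6) t'(6) NBC[OF D D']] by blast
  have D0': "diagonalizes \<pi> Q' U0 lam1"
    by (rule U_transfer(1)[OF D0 D1 pos R R' t(4) t'(4) NAB[OF D0 D1]])
  have triple: "Lap \<mu> (lam0 i * ta + lam0 j * tb + lam0 k * tc)
           = Lap \<mu>' (lam1 i * ta' + lam1 j * tb' + lam1 k * tc')" if nz: "nu \<pi> U0 i j k \<noteq> 0" for i j k
  proof -
    define X where "X a b c = nu \<pi> U0 a b c * (Lap \<mu> (lam0 a * ta + lam0 b * tb + lam0 c * tc)
           - Lap \<mu>' (lam1 a * ta' + lam1 b * tb' + lam1 c * tc'))" for a b c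
    have z: "(\<Sum>a\<in>UNIV. \<Sum>b\<in>UNIV. \<Sum>c\<in>UNIV. U0 $ x $ a * U0 $ y $ b * U0 $ z $ c * X a b c) = 0" for x y z
    proof -
      have e: "jointP \<pi> Q \<mu> ta tb tc x y z - jointP \<pi> Q' \<mu>' ta' tb' tc' x y z
        = \<pi> $ x * \<pi> $ y * \<pi> $ z * (\<Sum>a\<in>UNIV. \<Sum>b\<in>UNIV. \<Sum>c\<in>UNIV. U0 $ x $ a * U0 $ y $ b * U0 $ z $ c * X a b c)"
        unfolding jointP_expand[OF D0 pos R t(1,2,3)] jointP_expand[OF D0' pos R' t'(1,2,3)]
        by (simp add: X_def sum_subtractf[symmetric] sum_distrib_left algebra_simps)
      have "\<pi> $ x * \<pi> $ y * \<pi> $ z \<noteq> 0" using pos[of x] pos[of y] pos[of z] by simp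
      then show ?thesis using e sameP[of x y z] by simp
    qed
    have "X i j k = 0" by (rule tensor_inv[OF diag_basic(5)[OF D0 pos] z])
    then show ?thesis using nz unfolding X_def by simp
  qed
  show ?thesis using seteq lapeq D0 D0' triple by blast
qed

theorem proposition1:
  fixes \<pi> \<pi>' :: "(real, 'n::{finite,linorder}) vec"
    and Q Q' :: "((real, 'n) vec, 'n) vec"
    and \<mu> \<mu>' :: "real measure"
    and ta tb tc ta' tb' tc' :: real
  assumes "GTR \<pi> Q" and "rate_dist \<mu>" and "edges_ok ta tb tc"
    and "GTR \<pi>' Q'" and "rate_dist \<mu>'" and "edges_ok ta' tb' tc'"
    and sameP: "\<And>i j k. jointP \<pi> Q \<mu> ta tb tc i j k = jointP \<pi>' Q' \<mu>' ta' tb' tc' i j k"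
  shows "\<pi> = \<pi>' \<and>
    {U. \<exists>lam. diagonalizes \<pi> Q U lam} = {U. \<exists>lam. diagonalizes \<pi>' Q' U lam} \<and>
    (\<forall>U lam U' lam' i. diagonalizes \<pi> Q U lam \<longrightarrow> diagonalizes \<pi>' Q' U' lam' \<longrightarrow>
        Lap \<mu> (lam i * (ta + tb)) = Lap \<mu>' (lam' i * (ta' + tb')) \<and>
        Lap \<mu> (lam i * (ta + tc)) = Lap \<mu>' (lam' i * (ta' + tc')) \<and>
        Lap \<mu> (lam i * (tb + tc)) = Lap \<mu>' (lam' i * (tb' + tc'))) \<and>
    (\<exists>U lam lam'. diagonalizes \<pi> Q U lam \<and> diagonalizes \<pi>' Q' U lam' \<and>
        (\<forall>i j k. nu \<pi> U i j k \<noteq> 0 \<longrightarrow>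
           Lap \<mu> (lam i * ta + lam j * tb + lam k * tc)
           = Lap \<mu>' (lam' i * ta' + lam' j * tb' + lam' k * tc')))"
proof -
  have pos: "\<And>i. \<pi> $ i > 0" using assms(1) unfolding GTR_def by blast
  have pos': "\<And>i. \<pi>' $ i > 0" using assms(4) unfolding GTR_def by blast
  obtain U0 lam0 where D0: "diagonalizes \<pi> Q U0 lam0" using exists_diag[OF assms(1)] by blast
  obtain U1 lam1 where D1: "diagonalizes \<pi>' Q' U1 lam1" using exists_diag[OF assms(4)] by blast
  have t: "ta \<ge> 0" "tb \<ge> 0" "tc \<ge> 0" using assms(3) unfolding edges_ok_def by auto
  have t': "ta' \<ge> 0" "tb' \<ge> 0" "tc' \<ge> 0" using assms(6) unfolding edges_ok_def by auto
  have peq: "\<pi> = \<pi>'"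
  proof (subst vec_eq_iff, rule allI)
    fix i
    have "\<pi> $ i = (\<Sum>j\<in>UNIV. \<Sum>k\<in>UNIV. jointP \<pi> Q \<mu> ta tb tc i j k)"
      using marg1[OF D0 pos assms(2) t] by simp
    also have "\<dots> = (\<Sum>j\<in>UNIV. \<Sum>k\<in>UNIV. jointP \<pi>' Q' \<mu>' ta' tb' tc' i j k)"
      by (simp add: sameP)
    also have "\<dots> = \<pi>' $ i" using marg1[OF D1 pos' assms(5) t'] by simp
    finally show "\<pi> $ i = \<pi>' $ i" .
  qed
  have M: "{U. \<exists>lam. diagonalizes \<pi> Q U lam} = {U. \<exists>lam. diagonalizes \<pi> Q' U lam} \<and>
    (\<forall>U lam U' lam' i. diagonalizes \<pi> Q U lam \<longrightarrow> diagonalizes \<pi> Q' U' lam' \<longrightarrow>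
        Lap \<mu> (lam i * (ta + tb)) = Lap \<mu>' (lam' i * (ta' + tb')) \<and>
        Lap \<mu> (lam i * (ta + tc)) = Lap \<mu>' (lam' i * (ta' + tc')) \<and>
        Lap \<mu> (lam i * (tb + tc)) = Lap \<mu>' (lam' i * (tb' + tc'))) \<and>
    (\<exists>U lam lam'. diagonalizes \<pi> Q U lam \<and> diagonalizes \<pi> Q' U lam' \<and>
        (\<forall>i j k. nu \<pi> U i j k \<noteq> 0 \<longrightarrow>
           Lap \<mu> (lam i * ta + lam j * tb + lam k * tc)
           = Lap \<mu>' (lam' i * ta' + lam' j * tb' + lam' k * tc')))"
    by (rule main_same[OF pos assms(2) assms(5) assms(3) assms(6) D0 D1[folded peq] sameP[folded peq]])
  show ?thesis using M peq by simp
qed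


end
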